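(* Let $P=\sum_Ia_Ix^I\in\mathbb{R}[x_1,\dots,x_k]$, where $I=(i_1,\dots,i_k)$ ranges over $(\mathbb{N}\cup\{0\})^k$ and $x^I=x_1^{i_1}\cdots x_k^{i_k}$. Suppose $P$ is positive dominant, i.e. $A_I:=\sum_{I'\le I}a_{I'}>0$ for every multi-index $I$, where $I'\le I$ means $i'_j\le i_j$ for all $j$. Then $P>0$ on $[0,1]^k$. *)

theory Defs
  imports Complex_Main
begin

text \<open>A real polynomial in the variables indexed by the finite type 'k is represented
by its coefficient function on multi-indices I :: 'k \<Rightarrow> nat, with finite support.\<close>

definition mpoly_eval :: "(('k::finite \<Rightarrow> nat) \<Rightarrow> real) \<Rightarrow> ('k \<Rightarrow> real) \<Rightarrow> real" where
  "mpoly_eval a x = (\<Sum>I\<in>{I. a I \<noteq> 0}. a I * (\<Prod>j\<in>UNIV. x j ^ I j))"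

definition positive_dominant :: "(('k::finite \<Rightarrow> nat) \<Rightarrow> real) \<Rightarrow> bool" where
  "positive_dominant a \<longleftrightarrow> (\<forall>I. (\<Sum>I'\<in>{I'. I' \<le> I}. a I') > 0)"

end

theory Submission
  imports Defs "HOL-Library.FuncSet"
begin

definition wt :: "real \<Rightarrow> nat \<Rightarrow> nat \<Rightarrow> real" where
  "wt t N n = (if n = N then t ^ N else t ^ n - t ^ Suc n)"

lemma wt_nonneg: "0 \<le> t \<Longrightarrow> t \<le> 1 \<Longrightarrow> 0 \<le> wt t N n"
  unfolding wt_def by (auto simp: mult_left_le_one_le)

lemma tele: assumes "i \<le> N" shows "t ^ i = (\<Sum>n\<in>{i..N}. wt t N n)"
proof -
  have e: "{i..N} = insert N {i..<N}" using assms by auto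
  have "(\<Sum>n\<in>{i..N}. wt t N n) = t ^ N + (\<Sum>n\<in>{i..<N}. wt t N n)"
    unfolding e by (simp add: wt_def)
  also have "(\<Sum>n\<in>{i..<N}. wt t N n) = (\<Sum>n\<in>{i..<N}. (-(t ^ Suc n)) - (-(t ^ n)))"
    by (intro sum.cong) (auto simp: wt_def)
  also have "\<dots> = t ^ i - t ^ N" using sum_Suc_diff'[OF assms, of "\<lambda>n. -(t ^ n)"] by simp
  finally show ?thesis by simp
qed

lemma prodsum:
  fixes f :: "'k::finite \<Rightarrow> nat \<Rightarrow> real"
  assumes that: "\<And>j. finite (S j)"
  shows "(\<Prod>j\<in>UNIV. \<Sum>n\<in>S j. f j n) = (\<Sum>J\<in>{J. \<forall>j. J j \<in> S j}. \<Prod>j\<in>UNIV. f j (J j))"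
proof -
  have "PiE UNIV S = {J. \<forall>j. J j \<in> S j}" by (auto simp: PiE_def Pi_def extensional_def)
  thus ?thesis using prod_sum_PiE[of UNIV S f] that by simp
qed

theorem lemma7p2:
  fixes a :: "('k::finite \<Rightarrow> nat) \<Rightarrow> real" and x :: "'k \<Rightarrow> real"
  assumes "finite {I. a I \<noteq> 0}"
    and "positive_dominant a"
    and "\<And>j. 0 \<le> x j \<and> x j \<le> 1"
  shows "mpoly_eval a x > 0"
proof -
  define N where "N = Max ({I j | I j. a I \<noteq> 0} \<union> {0})"
  have fin1: "finite {I j | I j. a I \<noteq> 0}"
  proof -
    have "{I j | I j. a I \<noteq> 0} = (\<lambda>(I, j). I j) ` ({I. a I \<noteq> 0} \<times> UNIV)" by auto
    thus ?thesis using assms(1) by simp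
  qed
  have Nb: "a I \<noteq> 0 \<Longrightarrow> I j \<le> N" for I j
    unfolding N_def using fin1 by (intro Max_ge) auto
  define B where "B = {J::'k\<Rightarrow>nat. \<forall>j. J j \<in> {..N}}"
  have finB: "finite B"
  proof -
    have "B = PiE UNIV (\<lambda>_. {..N})" by (auto simp: B_def PiE_def Pi_def extensional_def)
    thus ?thesis by (simp add: finite_PiE)
  qed
  define w where "w J = (\<Prod>j\<in>UNIV. wt (x j) N (J j))" for J
  have w0: "w J \<ge> 0" for J unfolding w_def using assms(3) wt_nonneg by (simp add: prod_nonneg)
  have xI: "(\<Prod>j\<in>UNIV. x j ^ I j) = (\<Sum>J\<in>{J\<in>B. I \<le> J}. w J)" if "I \<in> B" for I
  proof -
    have "(\<Prod>j\<in>UNIV. x j ^ I j) = (\<Prod>j\<in>UNIV. \<Sum>n\<in>{I j..N}. wt (x j) N n)"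
      using that tele by (auto simp: B_def intro!: prod.cong)
    also have "\<dots> = (\<Sum>J\<in>{J. \<forall>j. J j \<in> {I j..N}}. w J)"
      unfolding w_def by (rule prodsum) auto
    also have "{J. \<forall>j. J j \<in> {I j..N}} = {J\<in>B. I \<le> J}"
      by (auto simp: B_def le_fun_def)
    finally show ?thesis .
  qed
  have "mpoly_eval a x = (\<Sum>I\<in>B. a I * (\<Prod>j\<in>UNIV. x j ^ I j))"
    unfolding mpoly_eval_def using finB Nb
    by (intro sum.mono_neutral_left) (auto simp: B_def)
  also have "\<dots> = (\<Sum>I\<in>B. \<Sum>J\<in>B. if I \<le> J then a I * w J else 0)"
    using xI by (auto simp: sum_distrib_left sum.inter_filter[OF finB] intro!: sum.cong)
  also have "\<dots> = (\<Sum>J\<in>B. \<Sum>I\<in>B. if I \<le> J then a I * w J else 0)"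
    by (rule sum.swap)
  also have "\<dots> = (\<Sum>J\<in>B. w J * (\<Sum>I\<in>{I'. I' \<le> J}. a I))"
  proof (intro sum.cong refl)
    fix J assume J: "J \<in> B"
    have "{I\<in>B. I \<le> J} = {I'. I' \<le> J}" using J by (auto simp: B_def le_fun_def intro: le_trans)
    thus "(\<Sum>I\<in>B. if I \<le> J then a I * w J else 0) = w J * (\<Sum>I\<in>{I'. I' \<le> J}. a I)"
      by (simp add: sum.inter_filter[OF finB, symmetric] sum_distrib_left mult.commute)
  qed
  also have "\<dots> > 0"
  proof -
    have "(\<lambda>_. 0) \<in> B" by (simp add: B_def)
    have "(\<Sum>J\<in>B. w J) = 1" using xI[OF \<open>(\<lambda>_. 0) \<in> B\<close>] by (simp add: le_fun_def)
    then obtain J where J: "J \<in> B" "w J \<noteq> 0"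
      by (metis (mono_tags, lifting) sum.neutral zero_neq_one)
    have "w J * (\<Sum>I\<in>{I'. I' \<le> J}. a I) > 0"
      using J w0[of J] assms(2) unfolding positive_dominant_def by auto
    moreover have "w K * (\<Sum>I\<in>{I'. I' \<le> K}. a I) \<ge> 0" for K
      using w0[of K] assms(2) unfolding positive_dominant_def by (simp add: less_imp_le)
    ultimately show ?thesis using J finB by (intro sum_pos2[where i=J]) auto
  qed
  finally show ?thesis .
qed

end
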